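(* Let $\rho$ be a density matrix on $\mathbb{C}^d$ and $X$ a $d\times d$ Hermitian matrix. Then $I^s(\rho,X)$ is a monotonically decreasing function of $s\in[-\infty,0]$ and is bounded by the variance: $I^{0}(\rho,X)\le I^{s}(\rho,X)\le I^{t}(\rho,X)\le I^{-\infty}(\rho,X)\le V(\rho,X)$ for all $-\infty\le t\le s\le 0$, where $V(\rho,X)=\mathrm{Tr}[\rho X^\dagger X]-|\mathrm{Tr}[\rho X^\dagger]|^2$. Moreover, if $\rho$ is a pure state, then $I^s(\rho,X)=V(\rho,X)$ for every $s\in[-\infty,0]$.
   Context: Write $\rho=\sum_{i=1}^{d}\lambda_i|\psi_i\rangle\langle\psi_i|$ with $\{|\psi_i\rangle\}$ an orthonormal basis of eigenvectors of $\rho$ and $\lambda_1\ge\cdots\ge\lambda_d\ge 0$. For $-\infty<s<0$ and $a_1,a_2>0$ define $m_s(a_1,a_2)=\left(\frac{a_1^s+a_2^s}{2}\right)^{1/s}$; set $m_0(a_1,a_2)=\sqrt{a_1a_2}$, $m_{-\infty}(a_1,a_2)=\min\{a_1,a_2\}$, and $m_s(a,0)=m_s(0,a)=m_s(0,0)=0$ for all $s\in[-\infty,0]$. Define $\zeta_\rho^s(X,Y)=\mathrm{Tr}[\rho X^\dagger Y]-\sum_{i,j=1}^d m_s(\lambda_i,\lambda_j)\langle\psi_i|X^\dagger|\psi_j\rangle\langle\psi_j|Y|\psi_i\rangle$ and $I^s(\rho,X)=\zeta_\rho^s(X,X)$. *)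

theory Defs
  imports "Jordan_Normal_Form.Schur_Decomposition" "HOL-Library.Extended_Real"
begin

(* Matrices are Jordan_Normal_Form complex matrices of size d x d; complex numbers are
   ordered by HOL-Library.Complex_Order (a \<le> b iff Re a \<le> Re b and Im a = Im b). *)

definition mtrace :: "complex mat \<Rightarrow> complex" where
  "mtrace A = (\<Sum>i<dim_row A. A $$ (i,i))"

definition hermitian_mat :: "nat \<Rightarrow> complex mat \<Rightarrow> bool" where
  "hermitian_mat d A \<longleftrightarrow> A \<in> carrier_mat d d \<and> mat_adjoint A = A"

definition density_matrix :: "nat \<Rightarrow> complex mat \<Rightarrow> bool" where
  "density_matrix d \<rho> \<longleftrightarrow> hermitian_mat d \<rho>
     \<and> (\<forall>v \<in> carrier_vec d. 0 \<le> Re ((\<rho> *\<^sub>v v) \<bullet>c v))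
     \<and> mtrace \<rho> = 1"

definition ket_bra :: "complex vec \<Rightarrow> complex mat" where
  "ket_bra v = mat (dim_vec v) (dim_vec v) (\<lambda>(i,j). v $ i * cnj (v $ j))"

definition pure_state :: "nat \<Rightarrow> complex mat \<Rightarrow> bool" where
  "pure_state d \<rho> \<longleftrightarrow> (\<exists>v \<in> carrier_vec d. v \<bullet>c v = 1 \<and> \<rho> = ket_bra v)"

(* psi_1..psi_d (indexed 0..d-1) orthonormal basis of eigenvectors of rho with
   eigenvalues lam_1 \<ge> ... \<ge> lam_d \<ge> 0 *)
definition eigen_decomposition ::
  "nat \<Rightarrow> complex mat \<Rightarrow> (nat \<Rightarrow> real) \<Rightarrow> (nat \<Rightarrow> complex vec) \<Rightarrow> bool" where
  "eigen_decomposition d \<rho> lam psi \<longleftrightarrow>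
     (\<forall>i<d. psi i \<in> carrier_vec d)
   \<and> (\<forall>i<d. \<forall>j<d. psi i \<bullet>c psi j = (if i = j then 1 else 0))
   \<and> (\<forall>i<d. \<rho> *\<^sub>v psi i = of_real (lam i) \<cdot>\<^sub>v psi i)
   \<and> (\<forall>i j. i \<le> j \<longrightarrow> j < d \<longrightarrow> lam j \<le> lam i)
   \<and> (\<forall>i<d. 0 \<le> lam i)"

definition mean_s :: "ereal \<Rightarrow> real \<Rightarrow> real \<Rightarrow> real" where
  "mean_s s a b =
    (if a = 0 \<or> b = 0 then 0
     else if s = -\<infinity> then min a b
     else if s = 0 then sqrt (a * b)
     else ((a powr real_of_ereal s + b powr real_of_ereal s) / 2) powr (1 / real_of_ereal s))"

definition braket :: "complex vec \<Rightarrow> complex mat \<Rightarrow> complex vec \<Rightarrow> complex" where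
  "braket v M w = (M *\<^sub>v w) \<bullet>c v"

definition zeta_s ::
  "ereal \<Rightarrow> complex mat \<Rightarrow> (nat \<Rightarrow> real) \<Rightarrow> (nat \<Rightarrow> complex vec) \<Rightarrow> complex mat \<Rightarrow> complex mat \<Rightarrow> complex" where
  "zeta_s s \<rho> lam psi X Y =
     mtrace (\<rho> * mat_adjoint X * Y)
   - (\<Sum>i<dim_row \<rho>. \<Sum>j<dim_row \<rho>.
        of_real (mean_s s (lam i) (lam j)) * braket (psi i) (mat_adjoint X) (psi j) * braket (psi j) Y (psi i))"

definition I_s ::
  "ereal \<Rightarrow> complex mat \<Rightarrow> (nat \<Rightarrow> real) \<Rightarrow> (nat \<Rightarrow> complex vec) \<Rightarrow> complex mat \<Rightarrow> complex" where
  "I_s s \<rho> lam psi X = zeta_s s \<rho> lam psi X X"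

definition variance :: "complex mat \<Rightarrow> complex mat \<Rightarrow> complex" where
  "variance \<rho> X = mtrace (\<rho> * mat_adjoint X * X) - of_real ((cmod (mtrace (\<rho> * mat_adjoint X)))\<^sup>2)"

end

theory Submission imports Defs "HOL-Analysis.Convex" begin


lemma concave_pow_avg:
  fixes x y p :: real
  assumes "x > 0" "y > 0" "0 < p" "p < 1"
  shows "(x powr p + y powr p) / 2 \<le> ((x + y) / 2) powr p"
proof -
  define m where "m = (x + y) / 2"
  have m: "m > 0" using assms by (simp add: m_def)
  have Y: "\<And>u. u > 0 \<Longrightarrow> u powr p \<le> p * u + (1 - p)"
    using Youngs_inequality_0[of p "1 - p" _ 1] assms by fastforce
  have "(x/m) powr p + (y/m) powr p \<le> p * (x/m) + (1-p) + (p * (y/m) + (1-p))"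
    using Y[of "x/m"] Y[of "y/m"] assms m by (simp add: add_mono)
  also have "\<dots> = p * (x/m + y/m) + 2 - 2 * p" by (simp add: algebra_simps)
  also have "x/m + y/m = 2"
  proof -
    have "x/m + y/m = (x+y)/m" by (simp add: add_divide_distrib)
    also have "x + y = 2 * m" by (simp add: m_def)
    finally show ?thesis using m by simp
  qed
  also have "p * 2 + 2 - 2 * p = (2::real)" by simp
  finally have "(x powr p + y powr p) / m powr p \<le> 2"
    using assms m by (simp add: powr_divide add_divide_distrib)
  then show ?thesis using m by (simp add: m_def[symmetric] field_simps)
qed

lemma pm_le:
  fixes a b s t :: real
  assumes "a > 0" "b > 0" "t < s" "s < 0"
  shows "((a powr t + b powr t)/2) powr (1/t) \<le> ((a powr s + b powr s)/2) powr (1/s)"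
proof -
  define p where "p = s / t"
  have p: "0 < p" "p < 1" using assms by (auto simp: p_def field_simps)
  define x where "x = a powr t"
  define y where "y = b powr t"
  have xy: "x > 0" "y > 0" using assms by (auto simp: x_def y_def)
  have as: "a powr s = x powr p" "b powr s = y powr p"
    using assms by (auto simp: x_def y_def powr_powr p_def)
  have "(x powr p + y powr p) / 2 \<le> ((x + y) / 2) powr p"
    using concave_pow_avg[OF xy p] .
  then have "(((x + y) / 2) powr p) powr (1/s) \<le> ((x powr p + y powr p) / 2) powr (1/s)"
    using assms xy by (intro powr_mono2') (auto simp: add_pos_pos)
  also have "(((x + y) / 2) powr p) powr (1/s) = ((x + y) / 2) powr (1/t)"
    using assms by (simp add: powr_powr p_def)
  finally show ?thesis by (simp add: as x_def y_def)
qed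

lemma pm_le_sqrt:
  fixes a b s :: real
  assumes "a > 0" "b > 0" "s < 0"
  shows "((a powr s + b powr s)/2) powr (1/s) \<le> sqrt (a * b)"
proof -
  have "sqrt (a powr s * b powr s) \<le> (a powr s + b powr s)/2"
    by (rule arith_geo_mean_sqrt) auto
  then have "((a powr s + b powr s)/2) powr (1/s) \<le> (sqrt (a powr s * b powr s)) powr (1/s)"
    using assms by (intro powr_mono2') auto
  also have "sqrt (a powr s * b powr s) = (a * b) powr (s/2)"
    using assms by (simp add: powr_half_sqrt_powr powr_mult real_sqrt_mult)
  also have "((a * b) powr (s/2)) powr (1/s) = sqrt (a * b)"
    using assms by (simp add: powr_powr powr_half_sqrt[symmetric])
  finally show ?thesis .
qed

lemma min_le_pm:
  fixes a b t :: real
  assumes "a > 0" "b > 0" "t < 0"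
  shows "min a b \<le> ((a powr t + b powr t)/2) powr (1/t)"
proof -
  have m: "min a b > 0" using assms by auto
  have "a powr t \<le> (min a b) powr t" "b powr t \<le> (min a b) powr t"
    using assms m by (auto intro!: powr_mono2')
  then have "(a powr t + b powr t)/2 \<le> (min a b) powr t" by simp
  then have "((min a b) powr t) powr (1/t) \<le> ((a powr t + b powr t)/2) powr (1/t)"
    using assms by (intro powr_mono2') (auto intro: add_pos_pos)
  also have "((min a b) powr t) powr (1/t) = min a b" using assms m by (simp add: powr_powr)
  finally show ?thesis .
qed

lemma mean_mono:
  assumes "0 \<le> a" "0 \<le> b" "t \<le> s" "s \<le> (0::ereal)"
  shows "mean_s t a b \<le> mean_s s a b"
proof (cases "a = 0 \<or> b = 0")
  case True then show ?thesis by (simp add: mean_s_def)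
next
  case False
  then have ab: "a > 0" "b > 0" using assms by auto
  have msq: "min a b \<le> sqrt (a * b)"
    using ab by (intro real_le_rsqrt) (auto simp: min_def mult_mono power2_eq_square)
  show ?thesis
  proof (cases t rule: ereal_cases)
    case MInf
    show ?thesis
    proof (cases s rule: ereal_cases)
      case (real r)
      then show ?thesis using MInf ab False msq min_le_pm[of a b r] assms
        by (cases "r = 0") (auto simp: mean_s_def)
    qed (use MInf assms in \<open>auto simp: mean_s_def\<close>)
  next
    case (real r)
    then obtain q where q: "s = ereal q" using assms by (cases s) auto
    have rq: "r \<le> q" "q \<le> 0" using assms real q by auto
    show ?thesis
    proof (cases "q = 0")
      case True
      then show ?thesis using real q rq ab False pm_le_sqrt[of a b r]
        by (cases "r = 0") (auto simp: mean_s_def)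
    next
      case False
      then have "r < q \<or> r = q" "q < 0" using rq by auto
      then show ?thesis using real q ab pm_le[of a b r q] \<open>\<not> (a = 0 \<or> b = 0)\<close>
        by (auto simp: mean_s_def)
    qed
  qed (use assms in auto)
qed

lemma mean_diag:
  assumes "0 \<le> a" "s \<le> (0::ereal)"
  shows "mean_s s a a = a"
  using assms by (cases "a = 0"; cases s) (auto simp: mean_s_def powr_powr)

lemma mean_nonneg: "0 \<le> a \<Longrightarrow> 0 \<le> b \<Longrightarrow> 0 \<le> mean_s s a b"
  by (auto simp: mean_s_def)



lemma cscalar_sum:
  fixes v w :: "complex vec"
  assumes "v \<in> carrier_vec n" "w \<in> carrier_vec n"
  shows "v \<bullet>c w = (\<Sum>k<n. v$k * cnj (w$k))"
  using assms by (simp add: scalar_prod_def atLeast0LessThan)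

lemma cscalar_swap:
  fixes v w :: "complex vec"
  assumes "v \<in> carrier_vec n" "w \<in> carrier_vec n"
  shows "v \<bullet>c w = cnj (w \<bullet>c v)"
  using assms by (simp add: cscalar_sum[OF assms] cscalar_sum[OF assms(2,1)] mult.commute)

lemma mulv_index:
  fixes M :: "complex mat"
  assumes "M \<in> carrier_mat n n" "w \<in> carrier_vec n" "k < n"
  shows "(M *\<^sub>v w) $ k = (\<Sum>l<n. M$$(k,l) * w$l)"
  using assms by (simp add: mult_mat_vec_def scalar_prod_def atLeast0LessThan)

lemma braket_sum:
  fixes M :: "complex mat"
  assumes "M \<in> carrier_mat n n" "v \<in> carrier_vec n" "w \<in> carrier_vec n"
  shows "braket v M w = (\<Sum>k<n. (\<Sum>l<n. M$$(k,l) * w$l) * cnj (v$k))"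
proof -
  have "M *\<^sub>v w \<in> carrier_vec n" using assms by simp
  then have "braket v M w = (\<Sum>k<n. (M *\<^sub>v w)$k * cnj (v$k))"
    unfolding braket_def using assms by (simp add: cscalar_sum[of _ n])
  also have "\<dots> = (\<Sum>k<n. (\<Sum>l<n. M$$(k,l) * w$l) * cnj (v$k))"
    by (intro sum.cong refl) (simp add: mulv_index[OF assms(1,3)])
  finally show ?thesis .
qed

lemma adj_carrier:
  fixes A :: "complex mat"
  assumes "A \<in> carrier_mat n n"
  shows "mat_adjoint A \<in> carrier_mat n n"
  using assms unfolding mat_adjoint_def carrier_mat_def by (simp add: mat_of_rows_def)

lemma adj_index:
  fixes A :: "complex mat"
  assumes "A \<in> carrier_mat n n" "i < n" "j < n"
  shows "mat_adjoint A $$ (i,j) = cnj (A $$ (j,i))"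
  using assms by (simp add: mat_adjoint_def mat_of_rows_def)

lemma braket_adj:
  fixes X :: "complex mat"
  assumes "X \<in> carrier_mat n n" "v \<in> carrier_vec n" "w \<in> carrier_vec n"
  shows "braket v (mat_adjoint X) w = cnj (braket w X v)"
proof -
  have "braket v (mat_adjoint X) w = (\<Sum>k<n. \<Sum>l<n. cnj (X$$(l,k)) * w$l * cnj (v$k))"
    using assms by (simp add: braket_sum[OF adj_carrier[OF assms(1)]] adj_index sum_distrib_right)
  also have "\<dots> = (\<Sum>l<n. \<Sum>k<n. cnj (X$$(l,k)) * w$l * cnj (v$k))"
    by (rule sum.swap)
  also have "\<dots> = cnj (braket w X v)"
    using assms by (simp add: braket_sum sum_distrib_right sum_distrib_left mult_ac)
  finally show ?thesis .
qed

lemma mtrace_sum: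
  fixes A :: "complex mat"
  assumes "A \<in> carrier_mat n n"
  shows "mtrace A = (\<Sum>i<n. A $$ (i,i))"
  using assms by (simp add: mtrace_def)

lemma trace_comm:
  fixes A B :: "complex mat"
  assumes "A \<in> carrier_mat n m" "B \<in> carrier_mat m n"
  shows "mtrace (A * B) = mtrace (B * A)"
proof -
  have "mtrace (A * B) = (\<Sum>i<n. \<Sum>k<m. A$$(i,k) * B$$(k,i))"
    using assms by (simp add: mtrace_def scalar_prod_def atLeast0LessThan)
  also have "\<dots> = (\<Sum>k<m. \<Sum>i<n. B$$(k,i) * A$$(i,k))"
    by (subst sum.swap) (simp add: mult.commute)
  also have "\<dots> = mtrace (B * A)"
    using assms by (simp add: mtrace_def scalar_prod_def atLeast0LessThan)
  finally show ?thesis .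
qed

lemma trace_basis:
  fixes A :: "complex mat"
  assumes car: "\<forall>i<d. psi i \<in> carrier_vec d"
    and orth: "\<forall>i<d. \<forall>j<d. psi i \<bullet>c psi j = (if i = j then 1 else 0)"
    and A: "A \<in> carrier_mat d d"
  shows "mtrace A = (\<Sum>i<d. braket (psi i) A (psi i))"
proof -
  define U :: "complex mat" where "U = mat d d (\<lambda>(k,i). psi i $ k)"
  define Uh :: "complex mat" where "Uh = mat d d (\<lambda>(i,k). cnj (psi i $ k))"
  have U: "U \<in> carrier_mat d d" and Uh: "Uh \<in> carrier_mat d d" by (auto simp: U_def Uh_def)
  have "Uh * U = 1\<^sub>m d"
  proof (rule eq_matI)
    fix i j assume ij: "i < dim_row (1\<^sub>m d :: complex mat)" "j < dim_col (1\<^sub>m d :: complex mat)"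
    then have "(Uh * U) $$ (i,j) = (\<Sum>k<d. psi j $ k * cnj (psi i $ k))"
      by (simp add: U_def Uh_def scalar_prod_def atLeast0LessThan mult.commute)
    also have "\<dots> = psi j \<bullet>c psi i" using car ij by (simp add: cscalar_sum[of _ d])
    also have "\<dots> = 1\<^sub>m d $$ (i,j)" using orth ij by auto
    finally show "(Uh * U) $$ (i,j) = 1\<^sub>m d $$ (i,j)" .
  qed (auto simp: U_def Uh_def)
  then have UUh: "U * Uh = 1\<^sub>m d" by (rule mat_mult_left_right_inverse[OF Uh U])
  have compl: "(\<Sum>i<d. psi i $ l * cnj (psi i $ k)) = (if l = k then 1 else 0)"
    if "l < d" "k < d" for l k
  proof -
    have "(U * Uh) $$ (l,k) = (\<Sum>i<d. psi i $ l * cnj (psi i $ k))"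
      using that by (simp add: U_def Uh_def scalar_prod_def atLeast0LessThan)
    then show ?thesis using UUh that by simp
  qed
  have "(\<Sum>i<d. braket (psi i) A (psi i)) = (\<Sum>i<d. \<Sum>k<d. \<Sum>l<d. A$$(k,l) * (psi i $ l * cnj (psi i $ k)))"
    using car A by (simp add: braket_sum sum_distrib_right sum_distrib_left mult_ac)
  also have "\<dots> = (\<Sum>k<d. \<Sum>l<d. \<Sum>i<d. A$$(k,l) * (psi i $ l * cnj (psi i $ k)))"
    by (subst sum.swap, rule sum.cong[OF refl], rule sum.swap)
  also have "\<dots> = (\<Sum>k<d. \<Sum>l<d. A$$(k,l) * (if l = k then 1 else 0))"
    by (simp add: sum_distrib_left[symmetric] compl)
  also have "\<dots> = (\<Sum>k<d. \<Sum>l<d. if l = k then A$$(k,l) else 0)"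
    by (intro sum.cong refl) auto
  also have "\<dots> = mtrace A" using A by (simp add: mtrace_def)
  finally show ?thesis by simp
qed



lemma cmp_lemma: "(T - complex_of_real x \<le> T - complex_of_real y) \<longleftrightarrow> y \<le> x"
  by (simp add: less_eq_complex_def)

theorem theorem2:
  fixes d :: nat and \<rho> X :: "complex mat" and lam :: "nat \<Rightarrow> real"
    and psi :: "nat \<Rightarrow> complex vec" and s t :: ereal
  assumes "density_matrix d \<rho>"
    and "hermitian_mat d X"
    and "eigen_decomposition d \<rho> lam psi"
    and "-\<infinity> \<le> t" and "t \<le> s" and "s \<le> 0"
  shows "I_s 0 \<rho> lam psi X \<le> I_s s \<rho> lam psi X
       \<and> I_s s \<rho> lam psi X \<le> I_s t \<rho> lam psi X
       \<and> I_s t \<rho> lam psi X \<le> I_s (-\<infinity>) \<rho> lam psi X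
       \<and> I_s (-\<infinity>) \<rho> lam psi X \<le> variance \<rho> X
       \<and> (pure_state d \<rho> \<longrightarrow> (\<forall>u::ereal. u \<le> 0 \<longrightarrow> I_s u \<rho> lam psi X = variance \<rho> X))"
proof -
  have rho: "\<rho> \<in> carrier_mat d d" and tr1: "mtrace \<rho> = 1"
    using assms(1) by (auto simp: density_matrix_def hermitian_mat_def)
  have Xc: "X \<in> carrier_mat d d" using assms(2) by (auto simp: hermitian_mat_def)
  have car: "\<forall>i<d. psi i \<in> carrier_vec d"
    and orth: "\<forall>i<d. \<forall>j<d. psi i \<bullet>c psi j = (if i = j then 1 else 0)"
    and eig: "\<And>i. i < d \<Longrightarrow> \<rho> *\<^sub>v psi i = of_real (lam i) \<cdot>\<^sub>v psi i"
    and lnn: "\<And>i. i < d \<Longrightarrow> 0 \<le> lam i"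
    using assms(3) by (auto simp: eigen_decomposition_def)
  have dr: "dim_row \<rho> = d" using rho by simp
  have Xa: "mat_adjoint X \<in> carrier_mat d d" using Xc by (rule adj_carrier)
  define c where "c i j = braket (psi j) X (psi i)" for i j
  define w where "w i j = (cmod (c i j))\<^sup>2" for i j
  define S where "S u = (\<Sum>i<d. \<Sum>j<d. mean_s u (lam i) (lam j) * w i j)" for u
  define T where "T = mtrace (\<rho> * mat_adjoint X * X)"
  have wnn: "0 \<le> w i j" for i j by (simp add: w_def)
  have Is: "I_s u \<rho> lam psi X = T - complex_of_real (S u)" for u
  proof -
    have trm: "braket (psi i) (mat_adjoint X) (psi j) * braket (psi j) X (psi i) = complex_of_real (w i j)"
      if "i < d" "j < d" for i j
    proof -
      have "braket (psi i) (mat_adjoint X) (psi j) = cnj (c i j)"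
        using that car Xc by (simp add: braket_adj c_def)
      then have "braket (psi i) (mat_adjoint X) (psi j) * braket (psi j) X (psi i) = c i j * cnj (c i j)"
        by (simp add: c_def mult.commute)
      also have "\<dots> = complex_of_real (w i j)" unfolding w_def by (rule complex_norm_square[symmetric])
      finally show ?thesis .
    qed
    show ?thesis
      unfolding I_s_def zeta_s_def S_def T_def dr
      by (simp add: trm mult.assoc)
  qed
  have trX: "mtrace (\<rho> * mat_adjoint X) = (\<Sum>i<d. of_real (lam i) * cnj (c i i))"
  proof -
    have "mtrace (\<rho> * mat_adjoint X) = mtrace (mat_adjoint X * \<rho>)"
      using rho Xa by (rule trace_comm)
    also have "\<dots> = (\<Sum>i<d. braket (psi i) (mat_adjoint X * \<rho>) (psi i))"
      using car orth Xa rho by (intro trace_basis) auto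
    also have "\<dots> = (\<Sum>i<d. of_real (lam i) * cnj (c i i))"
    proof (intro sum.cong refl)
      fix i assume i: "i \<in> {..<d}"
      have "(mat_adjoint X * \<rho>) *\<^sub>v psi i = mat_adjoint X *\<^sub>v (\<rho> *\<^sub>v psi i)"
        using Xa rho car i by (auto intro: assoc_mult_mat_vec)
      also have "\<dots> = of_real (lam i) \<cdot>\<^sub>v (mat_adjoint X *\<^sub>v psi i)"
        using eig i Xa car by (auto simp: mult_mat_vec)
      finally have "braket (psi i) (mat_adjoint X * \<rho>) (psi i)
          = of_real (lam i) * braket (psi i) (mat_adjoint X) (psi i)"
        unfolding braket_def using Xa car i by (auto simp: smult_scalar_prod_distrib)
      also have "braket (psi i) (mat_adjoint X) (psi i) = cnj (c i i)"
        unfolding c_def using Xc car i by (auto simp: braket_adj)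
      finally show "braket (psi i) (mat_adjoint X * \<rho>) (psi i) = of_real (lam i) * cnj (c i i)" .
    qed
    finally show ?thesis .
  qed
  have sumlam: "(\<Sum>i<d. lam i) = 1"
  proof -
    have "1 = mtrace \<rho>" using tr1 by simp
    also have "\<dots> = (\<Sum>i<d. braket (psi i) \<rho> (psi i))"
      using car orth rho by (intro trace_basis) auto
    also have "\<dots> = (\<Sum>i<d. complex_of_real (lam i))"
    proof (intro sum.cong refl)
      fix i assume i: "i \<in> {..<d}"
      then show "braket (psi i) \<rho> (psi i) = complex_of_real (lam i)"
        unfolding braket_def using eig[of i] car orth
        by (auto simp: smult_scalar_prod_distrib)
    qed
    finally show ?thesis
      by (metis of_real_eq_1_iff of_real_sum)
  qed
  have V: "variance \<rho> X = T - complex_of_real ((cmod (\<Sum>i<d. of_real (lam i) * cnj (c i i)))\<^sup>2)"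
    unfolding variance_def T_def trX ..
  have mono: "S t' \<le> S s'" if "t' \<le> s'" "s' \<le> 0" for t' s'
    unfolding S_def
    by (intro sum_mono mult_right_mono mean_mono wnn) (use that lnn in auto)
  have ts0: "t \<le> 0" using assms by auto
  have A1: "I_s 0 \<rho> lam psi X \<le> I_s s \<rho> lam psi X"
    unfolding Is cmp_lemma using mono[of s 0] assms by auto
  have A2: "I_s s \<rho> lam psi X \<le> I_s t \<rho> lam psi X"
    unfolding Is cmp_lemma using mono[of t s] assms by auto
  have A3: "I_s t \<rho> lam psi X \<le> I_s (-\<infinity>) \<rho> lam psi X"
    unfolding Is cmp_lemma using mono[of "-\<infinity>" t] ts0 by auto
  have A4: "I_s (-\<infinity>) \<rho> lam psi X \<le> variance \<rho> X"
  proof -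
    have "cmod (\<Sum>i<d. of_real (lam i) * cnj (c i i)) \<le> (\<Sum>i<d. lam i * cmod (c i i))"
      by (rule order_trans[OF norm_sum]) (auto simp: norm_mult lnn)
    then have "(cmod (\<Sum>i<d. of_real (lam i) * cnj (c i i)))\<^sup>2 \<le> (\<Sum>i<d. lam i * cmod (c i i))\<^sup>2"
      by (intro power_mono) auto
    also have "(\<Sum>i<d. lam i * cmod (c i i)) = (\<Sum>i<d. sqrt (lam i) * (sqrt (lam i) * cmod (c i i)))"
      by (intro sum.cong refl) (auto simp: lnn mult.assoc[symmetric])
    also have "(\<dots>)\<^sup>2 \<le> (\<Sum>i<d. (sqrt (lam i))\<^sup>2) * (\<Sum>i<d. (sqrt (lam i) * cmod (c i i))\<^sup>2)"
      by (rule Cauchy_Schwarz_ineq_sum)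
    also have "\<dots> = (\<Sum>i<d. lam i * w i i)"
      using sumlam lnn by (simp add: power_mult_distrib w_def)
    also have "\<dots> \<le> S (-\<infinity>)"
      unfolding S_def
    proof (intro sum_mono)
      fix i assume i: "i \<in> {..<d}"
      have "lam i * w i i = mean_s (-\<infinity>) (lam i) (lam i) * w i i"
        using mean_diag[of "lam i" "-\<infinity>"] lnn i by simp
      also have "\<dots> \<le> (\<Sum>j<d. mean_s (-\<infinity>) (lam i) (lam j) * w i j)"
        using i lnn wnn mean_nonneg
        by (intro member_le_sum[where f = "\<lambda>j. mean_s (-\<infinity>) (lam i) (lam j) * w i j"]) auto
      finally show "lam i * w i i \<le> (\<Sum>j<d. mean_s (-\<infinity>) (lam i) (lam j) * w i j)" .
    qed
    finally show ?thesis unfolding Is V cmp_lemma .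
  qed
  have A5: "I_s u \<rho> lam psi X = variance \<rho> X" if pure: "pure_state d \<rho>" and u: "u \<le> 0" for u
  proof -
    obtain v where v: "v \<in> carrier_vec d" "v \<bullet>c v = 1" "\<rho> = ket_bra v"
      using pure by (auto simp: pure_state_def)
    define \<alpha> where "\<alpha> i = psi i \<bullet>c v" for i
    have kb: "ket_bra v \<in> carrier_mat d d" using v by (auto simp: ket_bra_def)
    have kbi: "ket_bra v $$ (k,l) = v$k * cnj (v$l)" if "k < d" "l < d" for k l
      using v that by (auto simp: ket_bra_def)
    have rv: "\<rho> *\<^sub>v psi i = \<alpha> i \<cdot>\<^sub>v v" if i: "i < d" for i
    proof (rule eq_vecI)
      fix k assume "k < dim_vec (\<alpha> i \<cdot>\<^sub>v v)"
      then have k: "k < d" using v by simp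
      have "(\<rho> *\<^sub>v psi i) $ k = (\<Sum>l<d. v$k * cnj (v$l) * psi i $ l)"
        using mulv_index[OF kb car[rule_format, OF i] k] v kbi k by simp
      also have "\<dots> = v$k * \<alpha> i"
        using car i v by (simp add: \<alpha>_def cscalar_sum[of _ d] sum_distrib_left mult_ac)
      finally show "(\<rho> *\<^sub>v psi i) $ k = (\<alpha> i \<cdot>\<^sub>v v) $ k" using k v by simp
    next
      show "dim_vec (\<rho> *\<^sub>v psi i) = dim_vec (\<alpha> i \<cdot>\<^sub>v v)" using rho v by simp
    qed
    have key: "(\<rho> *\<^sub>v psi i) \<bullet>c psi j = \<alpha> i * cnj (\<alpha> j)" if "i < d" "j < d" for i j
    proof -
      have "(\<rho> *\<^sub>v psi i) \<bullet>c psi j = \<alpha> i * (v \<bullet>c psi j)"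
        using rv[OF that(1)] v car that by (simp add: smult_scalar_prod_distrib)
      also have "v \<bullet>c psi j = cnj (\<alpha> j)"
        unfolding \<alpha>_def using v car that by (intro cscalar_swap) auto
      finally show ?thesis .
    qed
    have key2: "(\<rho> *\<^sub>v psi i) \<bullet>c psi j = of_real (lam i) * (if i = j then 1 else 0)"
      if "i < d" "j < d" for i j
    proof -
      have "(\<rho> *\<^sub>v psi i) \<bullet>c psi j = of_real (lam i) * (psi i \<bullet>c psi j)"
        unfolding eig[OF that(1)] using car that
        by (intro smult_scalar_prod_distrib[of _ d]) auto
      then show ?thesis using orth that by simp
    qed
    have prod0: "lam i * lam j = 0" if "i < d" "j < d" "i \<noteq> j" for i j
    proof -
      have z: "\<alpha> i * cnj (\<alpha> j) = 0" using key[of i j] key2[of i j] that by simp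
      have li: "complex_of_real (lam i) = \<alpha> i * cnj (\<alpha> i)" using key[of i i] key2[of i i] that by simp
      have lj: "complex_of_real (lam j) = \<alpha> j * cnj (\<alpha> j)" using key[of j j] key2[of j j] that by simp
      have "complex_of_real (lam i * lam j) = (\<alpha> i * cnj (\<alpha> j)) * (\<alpha> j * cnj (\<alpha> i))"
        by (simp add: li lj mult_ac)
      also have "\<dots> = 0" using z by simp
      finally show ?thesis by simp
    qed
    obtain k where k: "k < d" "lam k \<noteq> 0"
    proof -
      have "\<not> (\<forall>i<d. lam i = 0)"
      proof
        assume "\<forall>i<d. lam i = 0"
        then have "(\<Sum>i<d. lam i) = 0" by simp
        then show False using sumlam by simp
      qed
      then show ?thesis using that by auto
    qed
    have lz: "lam i = 0" if "i < d" "i \<noteq> k" for i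
      using prod0[OF that(1) k(1) that(2)] k by simp
    have "(\<Sum>i<d. lam i) = lam k + (\<Sum>i\<in>{..<d} - {k}. lam i)"
      using k by (simp add: sum.remove)
    also have "(\<Sum>i\<in>{..<d} - {k}. lam i) = 0" using lz by (intro sum.neutral) auto
    finally have lk: "lam k = 1" using sumlam by simp
    have lamif: "lam i = (if i = k then 1 else 0)" if "i < d" for i
      using lz[OF that] lk by auto
    have ms: "mean_s u (lam i) (lam j) * w i j = (if i = k then (if j = k then w k k else 0) else 0)"
      if "i < d" "j < d" for i j
      using lamif[OF that(1)] lamif[OF that(2)] mean_diag[of 1 u] u by (auto simp: mean_s_def)
    have Su: "S u = w k k"
    proof -
      have "S u = (\<Sum>i<d. \<Sum>j<d. (if i = k then (if j = k then w k k else 0) else 0))"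
        unfolding S_def by (intro sum.cong refl) (simp add: ms)
      also have "\<dots> = (\<Sum>i<d. (if i = k then w k k else 0))"
        using k by (intro sum.cong refl) auto
      also have "\<dots> = w k k" using k by simp
      finally show ?thesis .
    qed
    have tr: "(\<Sum>i<d. of_real (lam i) * cnj (c i i)) = cnj (c k k)"
    proof -
      have "(\<Sum>i<d. of_real (lam i) * cnj (c i i)) = (\<Sum>i<d. if i = k then cnj (c k k) else 0)"
        by (intro sum.cong refl) (simp add: lamif)
      also have "\<dots> = cnj (c k k)" using k by simp
      finally show ?thesis .
    qed
    show ?thesis unfolding Is V tr Su by (simp add: w_def)
  qed
  show ?thesis using A1 A2 A3 A4 A5 by blast
qed

end
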